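(* Let $N\ge2$ be an integer, $u=1/N$, and $\mathscr{C}_k^u:=F^{-(k-1)}[u,1]$. Then \[\sum_{k=1}^n\lambda(\mathscr{C}_{k+1}^u)\log\!\left(1-\frac{k}{n+N}\right)=O\!\left(\frac{n}{\log n}\right)\qquad(n\to\infty).\]
   Context: $\lambda$ is Lebesgue measure; $F$ is the Farey map, $F(x)=x/(1-x)$ for $0\le x\le1/2$, $F(x)=(1-x)/x$ for $1/2<x\le1$; $F^{-k}$ denotes preimage under the $k$-th iterate. *)

theory Defs
  imports "HOL-Analysis.Analysis" "HOL-Library.Landau_Symbols"
begin

definition farey :: "real \<Rightarrow> real" where
  "farey x = (if x \<le> 1/2 then x / (1 - x) else (1 - x) / x)"

definition cyl :: "real \<Rightarrow> nat \<Rightarrow> real set" where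
  "cyl u k = {x \<in> {0..1}. (farey ^^ (k - 1)) x \<in> {u..1}}"

end

theory Submission
  imports Defs
begin


fun br :: "nat \<Rightarrow> (nat \<times> nat \<times> nat \<times> nat) list" where
  "br 0 = [(0,1,1,0)]"
| "br (Suc k) = concat (map (\<lambda>(a,b,c,d). [(a, a+b, c, c+d), (a+b, a, c+d, c)]) (br k))"

lemma sum_list_concat_map:
  "sum_list (map f (concat (map g xs))) = sum_list (map (\<lambda>x. sum_list (map f (g x))) xs)"
  by (induct xs) auto

lemma br_sum:
  "sum_list (map f (br (Suc k))) =
   sum_list (map (\<lambda>(a,b,c,d). f (a,a+b,c,c+d) + f (a+b,a,c+d,c)) (br k))"
  by (simp add: sum_list_concat_map case_prod_unfold)

lemma br_inv0:
  "q \<in> set (br k) \<Longrightarrow> (case q of (a,b,c,d) \<Rightarrow> c \<ge> 1 \<and> (real b * real c - real a * real d)^2 = 1)"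
proof (induction k arbitrary: q)
  case 0 then show ?case by simp
next
  case (Suc k)
  then obtain a b c d where q0: "(a,b,c,d) \<in> set (br k)"
    and q: "q = (a, a+b, c, c+d) \<or> q = (a+b, a, c+d, c)" by auto
  from Suc.IH[OF q0] have "c \<ge> 1" "(real b * c - real a * d)^2 = 1" by auto
  moreover have "(real (a+b) * c - real a * (c+d))^2 = (real b * c - real a * d)^2"
    "(real a * (c+d) - real (a+b) * c)^2 = (real b * c - real a * d)^2"
    by (simp_all add: algebra_simps power2_eq_square)
  ultimately show ?case using q by auto
qed

lemma br_inv: "(a,b,c,d) \<in> set (br k) \<Longrightarrow> c \<ge> 1 \<and> (real b * real c - real a * real d)^2 = 1"
  using br_inv0 by fastforce

lemma sum_list_div: "sum_list (map f xs) / (y::real) = sum_list (map (\<lambda>x. f x / y) xs)"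
  by (induct xs) (auto simp: add_divide_distrib)

lemma aux_T0: fixes C D E :: real assumes "C > 0" "D \<ge> 0" "E = C + (C + D)"
  shows "1 / (C * E) + 1 / ((C + D) * E) = 1 / (C * (C + D))"
proof -
  have p: "C + D > 0" "E > 0" "C > 0" using assms by auto
  show ?thesis using p assms by (simp add: divide_simps, (simp add: algebra_simps)?)
qed
lemma aux_T: fixes C D :: real assumes "C > 0" "D \<ge> 0"
  shows "1 / (C * (C + (C + D))) + 1 / ((C + D) * ((C + D) + C)) = 1 / (C * (C + D))"
  using aux_T0[OF assms, of "C + (C + D)"] by (simp add: add.commute add.left_commute)
lemma aux_G: fixes X C J :: real assumes "X > 0" "C \<ge> 0" "C \<le> X" "J \<ge> 0"
  shows "1 / X^2 / (J + 2) \<le> 1 / (X * ((J + 1) * X + C))"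
proof -
  have "1 / X^2 / (J + 2) = 1 / (X * ((J+2) * X))" by (simp add: power2_eq_square algebra_simps)
  also have "\<dots> \<le> 1 / (X * ((J + 1) * X + C))"
  proof (rule divide_left_mono)
    have "(J+1)*X > 0" using assms by (intro mult_pos_pos) auto
    then have a: "(J+1)*X + C > 0" using assms by linarith
    have b: "(J+2)*X > 0" using assms by (intro mult_pos_pos) auto
    show "0 < X * ((J + 2) * X) * (X * ((J + 1) * X + C))" using assms a b
      by (intro mult_pos_pos) auto
    show "X * ((J + 1) * X + C) \<le> X * ((J + 2) * X)" using assms
      by (intro mult_left_mono) (auto simp: algebra_simps)
  qed simp
  finally show ?thesis .
qed

definition A :: "nat \<Rightarrow> real" where
  "A k = sum_list (map (\<lambda>(a,b,c,d). 1 / (real c + real d)^2) (br k))"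

definition T :: "nat \<Rightarrow> real" where
  "T k = sum_list (map (\<lambda>(a,b,c,d). 1 / (real c * (real c + real d))) (br k))"

definition G :: "nat \<Rightarrow> nat \<Rightarrow> real" where
  "G k j = sum_list (map (\<lambda>(a,b,c,d). 1 / (real c * ((real j + 1) * real c + real d))) (br k))"

lemma A_nonneg: "A k \<ge> 0"
  unfolding A_def by (intro sum_list_nonneg) auto

lemma G_nonneg: "G k j \<ge> 0"
  unfolding G_def by (intro sum_list_nonneg) auto

lemma T_one: "T k = 1"
proof (induction k)
  case 0 then show ?case by (simp add: T_def)
next
  case (Suc k)
  have "T (Suc k) = sum_list (map (\<lambda>(a,b,c,d). 1 / (real c * (real c + real d))) (br k))"
    unfolding T_def br_sum
  proof (intro arg_cong[where f=sum_list] map_cong refl)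
    fix q assume "q \<in> set (br k)"
    obtain a b c d where q: "q = (a,b,c,d)" by (metis prod_cases4)
    have c: "c \<ge> 1" using br_inv \<open>q \<in> set (br k)\<close> q by blast
    have "1 / (real c * (real c + real (c + d))) + 1 / (real (c + d) * (real (c + d) + real c))
        = 1 / (real c * (real c + real d))"
      using c aux_T[of "real c" "real d"] by simp
    then show "(case q of (a, b, c, d) \<Rightarrow>
          (case (a, a + b, c, c + d) of (a, b, c, d) \<Rightarrow> 1 / (real c * (real c + real d))) +
          (case (a + b, a, c + d, c) of (a, b, c, d) \<Rightarrow> 1 / (real c * (real c + real d)))) =
         (case q of (a, b, c, d) \<Rightarrow> 1 / (real c * (real c + real d)))" using q by simp
  qed
  then show ?case using Suc by (simp add: T_def)
qed

lemma G_step: "G (Suc k) j \<ge> G k (Suc j) + A k / (real j + 2)"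
proof -
  have "G k (Suc j) + A k / (real j + 2) =
    sum_list (map (\<lambda>(a,b,c,d). 1 / (real c * ((real (Suc j) + 1) * real c + real d))
       + 1 / (real c + real d)^2 / (real j + 2)) (br k))"
    unfolding G_def A_def by (simp add: sum_list_addf sum_list_div case_prod_unfold)
  also have "\<dots> \<le> G (Suc k) j"
    unfolding G_def br_sum
  proof (intro sum_list_mono)
    fix q assume "q \<in> set (br k)"
    obtain a b c d where q: "q = (a,b,c,d)" by (metis prod_cases4)
    have c: "c \<ge> 1" using br_inv \<open>q \<in> set (br k)\<close> q by blast
    have e1: "1 / (real c * ((real (Suc j) + 1) * real c + real d)) = 
       1 / (real c * ((real j + 1) * real c + real (c + d)))"
      by (simp add: algebra_simps)
    have e2: "1 / (real c + real d)^2 / (real j + 2) \<le>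
       1 / (real (c+d) * ((real j + 1) * real (c+d) + real c))"
      using c aux_G[of "real c + real d" "real c" "real j"] by simp
    show "(case q of (a, b, c, d) \<Rightarrow> 1 / (real c * ((real (Suc j) + 1) * real c + real d))
             + 1 / (real c + real d)\<^sup>2 / (real j + 2))
         \<le> (case q of (a, b, c, d) \<Rightarrow>
          (case (a, a + b, c, c + d) of (a, b, c, d) \<Rightarrow> 1 / (real c * ((real j + 1) * real c + real d))) +
          (case (a + b, a, c + d, c) of (a, b, c, d) \<Rightarrow> 1 / (real c * ((real j + 1) * real c + real d))))"
      using q add_mono[OF eq_refl[OF e1] e2] by simp
  qed
  finally show ?thesis .
qed

lemma G_bound: "G k j \<ge> (\<Sum>i<k. A i / (real (j + k - i) + 1))"
proof (induction k arbitrary: j)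
  case 0 then show ?case using G_nonneg by simp
next
  case (Suc k)
  have "(\<Sum>i<Suc k. A i / (real (j + Suc k - i) + 1)) =
        (\<Sum>i<k. A i / (real (Suc j + k - i) + 1)) + A k / (real j + 2)"
    by (simp add: Suc_diff_le)
  also have "\<dots> \<le> G k (Suc j) + A k / (real j + 2)" using Suc.IH[of "Suc j"] by simp
  also have "\<dots> \<le> G (Suc k) j" by (rule G_step)
  finally show ?case .
qed

lemma renewal: "(\<Sum>i\<le>m. A i / (real (m - i) + 2)) \<le> 1"
proof -
  have "(\<Sum>i<Suc m. A i / (real (0 + Suc m - i) + 1)) \<le> G (Suc m) 0" by (rule G_bound)
  also have "G (Suc m) 0 = T (Suc m)" by (simp add: G_def T_def)
  also have "\<dots> = 1" by (rule T_one)
  finally show ?thesis by (simp add: lessThan_Suc_atMost Suc_diff_le add.commute)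
qed



lemma farey_range: "x \<in> {0..1} \<Longrightarrow> farey x \<in> {0..1}"
  unfolding farey_def by (auto simp: field_simps)

lemma farey_pow_range: "(farey ^^ k) x \<in> {0..1}" if "x \<in> {0..1}"
proof (induction k)
  case (Suc k) then show ?case using farey_range by simp
qed (use that in simp)

definition phi :: "nat \<times> nat \<times> nat \<times> nat \<Rightarrow> real \<Rightarrow> real" where
  "phi q y = (case q of (a,b,c,d) \<Rightarrow> (real a + real b * y) / (real c + real d * y))"

lemma comp0:
  fixes a b c d y :: real assumes "c > 0" "d \<ge> 0" "y \<ge> 0"
  shows "(a + b * (y / (1 + y))) / (c + d * (y / (1 + y))) = (a + (a + b) * y) / (c + (c + d) * y)"
proof -
  have p: "1 + y \<noteq> 0" using assms by auto
  have n: "a + b * (y / (1 + y)) = (a + (a + b) * y) / (1 + y)" using p by (simp add: field_simps)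
  have d: "c + d * (y / (1 + y)) = (c + (c + d) * y) / (1 + y)" using p by (simp add: field_simps)
  show ?thesis unfolding n d using p by simp
qed

lemma comp1:
  fixes a b c d y :: real assumes "c > 0" "d \<ge> 0" "y \<ge> 0"
  shows "(a + b * (1 / (1 + y))) / (c + d * (1 / (1 + y))) = ((a + b) + a * y) / ((c + d) + c * y)"
proof -
  have p: "1 + y \<noteq> 0" using assms by auto
  have n: "a + b * (1 / (1 + y)) = ((a + b) + a * y) / (1 + y)" using p by (simp add: field_simps)
  have d: "c + d * (1 / (1 + y)) = ((c + d) + c * y) / (1 + y)" using p by (simp add: field_simps)
  show ?thesis unfolding n d using p by simp
qed

lemma farey_inv0: "z \<in> {0..1} \<Longrightarrow> z \<le> 1/2 \<Longrightarrow> z = farey z / (1 + farey z)"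
  unfolding farey_def by (auto simp: field_simps)

lemma farey_inv1: "z \<in> {0..1} \<Longrightarrow> \<not> z \<le> 1/2 \<Longrightarrow> z = 1 / (1 + farey z)"
  unfolding farey_def by (auto simp: field_simps)

lemma branch:
  assumes "x \<in> {0..1}"
  shows "\<exists>q\<in>set (br k). x = phi q ((farey ^^ k) x)"
proof (induction k)
  case 0 then show ?case by (simp add: phi_def)
next
  case (Suc k)
  define z where "z = (farey ^^ k) x"
  define y where "y = farey z"
  have z01: "z \<in> {0..1}" using farey_pow_range[OF assms] by (simp add: z_def)
  have y01: "y \<in> {0..1}" using farey_range[OF z01] by (simp add: y_def)
  have ySuc: "(farey ^^ Suc k) x = y" by (simp add: y_def z_def)
  from Suc obtain a b c d where q: "(a,b,c,d) \<in> set (br k)" and xz: "x = phi (a,b,c,d) z"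
    by (auto simp: z_def)
  have c: "real c > 0" using br_inv[OF q] by auto
  show ?case
  proof (cases "z \<le> 1/2")
    case True
    have "x = phi (a, a+b, c, c+d) y"
      using xz farey_inv0[OF z01 True] comp0[OF c _ _, of "real d" y "real a" "real b"] y01
      by (simp add: phi_def y_def)
    moreover have "(a, a+b, c, c+d) \<in> set (br (Suc k))" using q by force
    ultimately show ?thesis using ySuc by metis
  next
    case False
    have "x = phi (a+b, a, c+d, c) y"
      using xz farey_inv1[OF z01 False] comp1[OF c _ _, of "real d" y "real a" "real b"] y01
      by (simp add: phi_def y_def)
    moreover have "(a+b, a, c+d, c) \<in> set (br (Suc k))" using q by force
    ultimately show ?thesis using ySuc by metis
  qed
qed

lemma phi_dist:
  assumes q: "(a,b,c,d) \<in> set (br k)" and N: "N \<ge> 1" and y: "y \<in> {1 / real N..1}"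
  shows "\<bar>phi (a,b,c,d) y - phi (a,b,c,d) 1\<bar> \<le> real N / (real c + real d)^2"
proof -
  have c: "real c \<ge> 1" and det: "(real b * real c - real a * real d)^2 = 1" using br_inv[OF q] by auto
  have absdet: "\<bar>real a * real d - real b * real c\<bar> = 1"
  proof -
    have "\<bar>real a * real d - real b * real c\<bar>^2 = 1" using det by (simp add: power2_eq_square algebra_simps)
    then show ?thesis by (simp add: abs_square_eq_1)
  qed
  have h: "1 / real N > 0" using N by simp
  have y1: "y \<le> 1" "y \<ge> 1 / real N" using y by auto
  have y0: "y \<ge> 0" "y \<le> 1" "y \<ge> 1 / real N" using y1 h by linarith+
  have Npos: "real N \<ge> 1" using N by simp
  have cdy: "real c + real d * y \<ge> (real c + real d) / real N"
  proof -
    have "real c / real N \<le> real c" using Npos c by (simp add: divide_le_eq, (simp add: mult_le_cancel_left1)?)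
    moreover have "real d / real N \<le> real d * y" 
    proof -
      have "real d * (1 / real N) \<le> real d * y" using y0 by (intro mult_left_mono) auto
      then show ?thesis by simp
    qed
    ultimately show ?thesis by (simp add: add_divide_distrib)
  qed
  have p1: "real c + real d * y > 0" using c y0 by (simp add: add_pos_nonneg)
  have p2: "real c + real d > 0" using c by simp
  have eq: "phi (a,b,c,d) y - phi (a,b,c,d) 1 =
      (real a * real d - real b * real c) * (1 - y) / ((real c + real d * y) * (real c + real d))"
    using p1 p2 by (simp add: phi_def field_simps, (simp add: algebra_simps)?)
  have "\<bar>phi (a,b,c,d) y - phi (a,b,c,d) 1\<bar> = (1 - y) / ((real c + real d * y) * (real c + real d))"
    using p1 p2 y0 by (simp add: eq abs_mult absdet)
  also have "\<dots> \<le> 1 / ((real c + real d * y) * (real c + real d))"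
    using p1 p2 y0 by (intro divide_right_mono) auto
  also have "\<dots> \<le> 1 / ((real c + real d) / real N * (real c + real d))"
    using p1 p2 Npos cdy by (intro divide_left_mono mult_right_mono mult_pos_pos) auto
  also have "\<dots> = real N / (real c + real d)^2"
    using p2 by (simp add: power2_eq_square)
  finally show ?thesis .
qed



definition rad :: "nat \<Rightarrow> nat \<times> nat \<times> nat \<times> nat \<Rightarrow> real" where
  "rad N q = (case q of (a,b,c,d) \<Rightarrow> real N / (real c + real d)^2)"

lemma cyl_cover:
  assumes N: "N \<ge> 1"
  shows "cyl (1 / real N) (k+1) \<subseteq>
    (\<Union>i\<in>{..<length (br k)}. {phi (br k ! i) 1 - rad N (br k ! i) .. phi (br k ! i) 1 + rad N (br k ! i)})"
proof
  fix x assume "x \<in> cyl (1 / real N) (k+1)"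
  then have x01: "x \<in> {0..1}" and y: "(farey ^^ k) x \<in> {1 / real N..1}" by (auto simp: cyl_def)
  obtain q where q: "q \<in> set (br k)" and xq: "x = phi q ((farey ^^ k) x)" using branch[OF x01] by blast
  obtain i where i: "i < length (br k)" "br k ! i = q" using q by (meson in_set_conv_nth)
  obtain a b c d where qq: "q = (a,b,c,d)" by (metis prod_cases4)
  have "\<bar>x - phi q 1\<bar> \<le> rad N q"
    using phi_dist[of a b c d k N "(farey ^^ k) x"] q qq N y xq by (simp add: rad_def)
  then show "x \<in> (\<Union>i\<in>{..<length (br k)}. {phi (br k ! i) 1 - rad N (br k ! i) .. phi (br k ! i) 1 + rad N (br k ! i)})"
    using i by (intro UN_I[of i]) (auto simp: abs_le_iff)
qed

lemma rad_nonneg: "rad N q \<ge> 0" by (auto simp: rad_def split: prod.splits)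

lemma measure_cyl:
  assumes N: "N \<ge> 1"
  shows "measure lebesgue (cyl (1 / real N) (k+1)) \<le> 2 * real N * A k"
proof -
  define I where "I i = {phi (br k ! i) 1 - rad N (br k ! i) .. phi (br k ! i) 1 + rad N (br k ! i)}" for i
  have fm: "(\<Union>i\<in>{..<length (br k)}. I i) \<in> fmeasurable lebesgue"
    by (intro fmeasurable.finite_UN) (auto simp: I_def)
  have "measure lebesgue (cyl (1 / real N) (k+1)) \<le> measure lebesgue (\<Union>i\<in>{..<length (br k)}. I i)"
  proof (cases "cyl (1 / real N) (k+1) \<in> sets lebesgue")
    case True
    then show ?thesis using cyl_cover[OF N, of k] fm
      by (intro measure_mono_fmeasurable) (auto simp: I_def)
  next
    case False
    then show ?thesis by (simp add: measure_notin_sets)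
  qed
  also have "\<dots> \<le> (\<Sum>i<length (br k). measure lebesgue (I i))"
    by (intro measure_UNION_le) (auto simp: I_def)
  also have "\<dots> = (\<Sum>i<length (br k). 2 * rad N (br k ! i))"
    using rad_nonneg by (simp add: I_def)
  also have "\<dots> = 2 * real N * A k"
  proof -
    have "A k = (\<Sum>i<length (br k). (\<lambda>(a,b,c,d). 1 / (real c + real d)^2) (br k ! i))"
      unfolding A_def by (simp add: sum_list_sum_nth atLeast0LessThan)
    then show ?thesis
      by (simp add: sum_distrib_left rad_def case_prod_unfold)
  qed
  finally show ?thesis .
qed



lemma harm_like: "(\<Sum>t<L. 1 / (real t + 2)) \<ge> ln ((real L + 2) / 2)"
proof (induction L)
  case 0 then show ?case by simp
next
  case (Suc L)
  have "ln ((real (Suc L) + 2) / 2) = ln ((real L + 2) / 2) + ln ((real L + 3) / (real L + 2))"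
  proof -
    have e: "(real L + 2) / 2 * ((real L + 3) / (real L + 2)) = (real (Suc L) + 2) / 2"
      by (simp add: field_simps)
    have m: "ln ((real L + 2) / 2 * ((real L + 3) / (real L + 2))) = ln ((real L + 2) / 2) + ln ((real L + 3) / (real L + 2))"
      by (rule ln_mult_pos) auto
    show ?thesis using m unfolding e .
  qed
  also have "ln ((real L + 3) / (real L + 2)) \<le> (real L + 3) / (real L + 2) - 1"
    by (intro ln_le_minus_one) auto
  also have "(real L + 3) / (real L + 2) - 1 = 1 / (real L + 2)" by (simp add: field_simps)
  finally show ?case using Suc by simp
qed

lemma ln3: "3 * ln (3::real) \<ge> 4 * ln 2"
proof -
  have a: "ln (16::real) = 4 * ln 2" using ln_realpow[of 2 4] by simp
  have b: "ln (27::real) = 3 * ln 3" using ln_realpow[of 3 3] by simp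
  have "ln (16::real) \<le> ln 27" by simp
  then show ?thesis using a b by simp
qed

lemma harm_like2: assumes "L \<ge> 1" shows "(\<Sum>t<L. 1 / (real t + 2)) \<ge> ln (real L + 2) / 4"
proof -
  have "ln (real L + 2) \<ge> ln 3" using assms by simp
  then have "ln (real L + 2) / 4 \<le> ln (real L + 2) - ln 2" using ln3 by linarith
  also have "\<dots> = ln ((real L + 2) / 2)" by (simp add: ln_div)
  finally show ?thesis using harm_like[of L] by linarith
qed

lemma ln_diff_le: assumes "1 \<le> p" "p \<le> q" shows "ln (real q) - ln (real p) \<le> (\<Sum>j\<in>{p..<q}. 1 / real j)"
  using assms(2)
proof (induction q rule: dec_induct)
  case base then show ?case by simp
next
  case (step n)
  have n: "real n \<ge> 1" using step assms by simp
  have "ln (real (Suc n)) - ln (real n) = ln (real (Suc n) / real n)" using n by (simp add: ln_div)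
  also have "\<dots> \<le> real (Suc n) / real n - 1" using n by (intro ln_le_minus_one) auto
  also have "\<dots> = 1 / real n" using n by (simp add: field_simps)
  finally show ?case using step by simp
qed

context
  fixes a :: "nat \<Rightarrow> real"
  assumes a_nonneg: "\<And>i. a i \<ge> 0"
    and ren: "\<And>m. (\<Sum>i\<le>m. a i / (real (m - i) + 2)) \<le> 1"
begin

lemma window1: "(\<Sum>t<L. 1 / (real t + 2)) * (\<Sum>i\<in>{A0..<A0+L}. a i) \<le> 2 * real L"
proof -
  define g where "g i m = (if i \<le> m then a i / (real (m - i) + 2) else 0)" for i m
  have g_nonneg: "g i m \<ge> 0" for i m using a_nonneg by (simp add: g_def)
  have step: "(\<Sum>t<L. a i / (real t + 2)) \<le> (\<Sum>m\<in>{A0..<A0+2*L}. g i m)" if i: "i \<in> {A0..<A0+L}" for i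
  proof -
    have "(\<Sum>t<L. a i / (real t + 2)) = (\<Sum>m\<in>(\<lambda>t. t + i) ` {..<L}. g i m)"
      by (subst sum.reindex) (auto simp: inj_on_def g_def)
    also have "\<dots> \<le> (\<Sum>m\<in>{A0..<A0+2*L}. g i m)"
      using i by (intro sum_mono2) (auto simp: g_nonneg)
    finally show ?thesis .
  qed
  have "(\<Sum>t<L. 1 / (real t + 2)) * (\<Sum>i\<in>{A0..<A0+L}. a i) = (\<Sum>i\<in>{A0..<A0+L}. \<Sum>t<L. a i / (real t + 2))"
    by (simp add: sum_distrib_left sum_distrib_right mult.commute sum.swap[of _ "{..<L}"] sum_divide_distrib)
  also have "\<dots> \<le> (\<Sum>i\<in>{A0..<A0+L}. \<Sum>m\<in>{A0..<A0+2*L}. g i m)"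
    by (intro sum_mono step)
  also have "\<dots> = (\<Sum>m\<in>{A0..<A0+2*L}. \<Sum>i\<in>{A0..<A0+L}. g i m)" by (rule sum.swap)
  also have "\<dots> \<le> (\<Sum>m\<in>{A0..<A0+2*L}. 1)"
  proof (intro sum_mono)
    fix m
    have "(\<Sum>i\<in>{A0..<A0+L}. g i m) = (\<Sum>i\<in>{A0..<A0+L} \<inter> {..m}. g i m)"
      by (rule sum.mono_neutral_right) (auto simp: g_def)
    also have "\<dots> \<le> (\<Sum>i\<in>{..m}. g i m)"
      using g_nonneg by (intro sum_mono2) auto
    also have "\<dots> = (\<Sum>i\<le>m. a i / (real (m - i) + 2))"
      by (intro sum.cong) (auto simp: g_def)
    also have "\<dots> \<le> 1" by (rule ren)
    finally show "(\<Sum>i\<in>{A0..<A0+L}. g i m) \<le> 1" .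
  qed
  also have "\<dots> = 2 * real L" by simp
  finally show ?thesis .
qed

lemma window: assumes "L \<ge> 1" shows "(\<Sum>i\<in>{A0..<A0+L}. a i) \<le> 8 * real L / ln (real L + 2)"
proof -
  have lp: "ln (real L + 2) > 0" by simp
  have "ln (real L + 2) / 4 * (\<Sum>i\<in>{A0..<A0+L}. a i) \<le> (\<Sum>t<L. 1 / (real t + 2)) * (\<Sum>i\<in>{A0..<A0+L}. a i)"
    using harm_like2[OF assms] a_nonneg by (intro mult_right_mono sum_nonneg) auto
  also have "\<dots> \<le> 2 * real L" by (rule window1)
  finally show ?thesis using lp by (simp add: field_simps)
qed

lemma inner_bound: assumes "1 \<le> j" "j < M" "n < M"
  shows "(\<Sum>k\<in>{1..n}. if M \<le> j + k then a k else 0) \<le> 8 * real j / ln (real j + 2)"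
proof -
  have "(\<Sum>k\<in>{1..n}. if M \<le> j + k then a k else 0) = (\<Sum>k\<in>{1..n} \<inter> {k. M \<le> j + k}. if M \<le> j + k then a k else 0)"
    by (rule sum.mono_neutral_right) auto
  also have "\<dots> = (\<Sum>k\<in>{1..n} \<inter> {k. M \<le> j + k}. a k)" by (intro sum.cong) auto
  also have "\<dots> \<le> (\<Sum>k\<in>{M-j..<M-j+j}. a k)"
    using a_nonneg assms by (intro sum_mono2) auto
  also have "\<dots> \<le> 8 * real j / ln (real j + 2)" using assms by (intro window) auto
  finally show ?thesis .
qed

lemma main_sum0: assumes nM: "n < M"
  shows "(\<Sum>k=1..n. a k * (- ln (1 - real k / real M))) \<le> 8 * (\<Sum>j\<in>{1..<M}. 1 / ln (real j + 2))"
proof -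
  have wk: "- ln (1 - real k / real M) \<le> (\<Sum>j\<in>{1..<M}. if M \<le> j + k then 1 / real j else 0)"
    if k: "k \<in> {1..n}" for k
  proof -
    have kM: "k < M" using k nM by auto
    have "1 - real k / real M = real (M - k) / real M" using kM by (simp add: field_simps of_nat_diff)
    then have "- ln (1 - real k / real M) = ln (real M) - ln (real (M - k))"
      using kM by (simp add: ln_div)
    also have "\<dots> \<le> (\<Sum>j\<in>{M-k..<M}. 1 / real j)" using kM by (intro ln_diff_le) auto
    also have "\<dots> = (\<Sum>j\<in>{1..<M}. if M \<le> j + k then 1 / real j else 0)"
      using kM k by (intro sum.mono_neutral_cong_left) auto
    finally show ?thesis .
  qed
  have "(\<Sum>k=1..n. a k * (- ln (1 - real k / real M))) \<le>
        (\<Sum>k=1..n. a k * (\<Sum>j\<in>{1..<M}. if M \<le> j + k then 1 / real j else 0))"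
  proof (intro sum_mono mult_left_mono)
    fix k assume "k \<in> {1..n}"
    then show "- ln (1 - real k / real M) \<le> (\<Sum>j\<in>{1..<M}. if M \<le> j + k then 1 / real j else 0)"
      by (rule wk)
    show "0 \<le> a k" by (rule a_nonneg)
  qed
  also have "\<dots> = (\<Sum>k=1..n. \<Sum>j\<in>{1..<M}. 1 / real j * (if M \<le> j + k then a k else 0))"
    by (simp add: sum_distrib_left, intro sum.cong refl, simp)
  also have "\<dots> = (\<Sum>j\<in>{1..<M}. 1 / real j * (\<Sum>k=1..n. if M \<le> j + k then a k else 0))"
    by (subst sum.swap) (simp add: sum_distrib_left)
  also have "\<dots> \<le> (\<Sum>j\<in>{1..<M}. 1 / real j * (8 * real j / ln (real j + 2)))"
  proof (intro sum_mono mult_left_mono)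
    fix j assume "j \<in> {1..<M}"
    then show "(\<Sum>k=1..n. if M \<le> j + k then a k else 0) \<le> 8 * real j / ln (real j + 2)"
      using nM by (intro inner_bound) auto
    show "0 \<le> 1 / real j" by simp
  qed
  also have "\<dots> = 8 * (\<Sum>j\<in>{1..<M}. 1 / ln (real j + 2))"
    unfolding sum_distrib_left by (intro sum.cong refl) auto
  finally show ?thesis .
qed

lemma main_sum: assumes "N \<ge> 1"
  shows "(\<Sum>k=1..n. a k * (- ln (1 - real k / real (n+N)))) \<le> 8 * (\<Sum>j\<in>{1..<n+N}. 1 / ln (real j + 2))"
  by (rule main_sum0) (use assms in simp)

end


lemma sum_ln_bound: assumes M: "M \<ge> 2"
  shows "(\<Sum>j\<in>{1..<M}. 1 / ln (real j + 2)) \<le> (sqrt (real M) + 1) / ln 2 + 2 * real M / ln (real M)"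
proof -
  define P where "P j = (real j + 2 < sqrt (real M))" for j
  have lnM: "ln (real M) > 0" using M by simp
  have tm: "1 / ln (real j + 2) \<le> (if P j then 1 / ln 2 else 0) + 2 / ln (real M)" for j
  proof (cases "P j")
    case True
    have "ln 2 \<le> ln (real j + 2)" by simp
    then have "1 / ln (real j + 2) \<le> 1 / ln 2" by (intro divide_left_mono) auto
    moreover have "2 / ln (real M) \<ge> 0" using lnM by simp
    moreover have "(if P j then 1 / ln 2 else 0) = 1 / ln (2::real)" using True by simp
    ultimately show ?thesis by linarith
  next
    case False
    then have "sqrt (real M) \<le> real j + 2" by (simp add: P_def)
    moreover have "sqrt (real M) > 0" using M by simp
    ultimately have "ln (sqrt (real M)) \<le> ln (real j + 2)" by simp
    then have h: "ln (real M) / 2 \<le> ln (real j + 2)" by (simp add: ln_sqrt)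
    have "1 / ln (real j + 2) \<le> 1 / (ln (real M) / 2)"
      using h lnM by (intro divide_left_mono) auto
    then show ?thesis using False by simp
  qed
  have "(\<Sum>j\<in>{1..<M}. 1 / ln (real j + 2)) \<le> (\<Sum>j\<in>{1..<M}. (if P j then 1 / ln 2 else 0) + 2 / ln (real M))"
    by (intro sum_mono tm)
  also have "\<dots> = (\<Sum>j\<in>{1..<M}. (if P j then 1 / ln 2 else 0)) + (\<Sum>j\<in>{1..<M}. 2 / ln (real M))"
    by (rule sum.distrib)
  also have "\<dots> = (\<Sum>j\<in>{j\<in>{1..<M}. P j}. 1 / ln 2) + real (M - 1) * (2 / ln (real M))"
  proof -
    have e1: "(\<Sum>j\<in>{1..<M}. (if P j then 1 / ln 2 else 0)) = (\<Sum>j\<in>{j\<in>{1..<M}. P j}. 1 / ln (2::real))"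
      by (rule sum.inter_filter[symmetric]) simp
    show ?thesis unfolding e1 by simp
  qed
  also have "\<dots> \<le> (sqrt (real M) + 1) / ln 2 + 2 * real M / ln (real M)"
  proof (rule add_mono)
    have sub: "{j\<in>{1..<M}. P j} \<subseteq> {..<nat \<lceil>sqrt (real M)\<rceil>}"
    proof
      fix j assume "j \<in> {j\<in>{1..<M}. P j}"
      then have "real j < sqrt (real M)" by (simp add: P_def)
      also have "\<dots> \<le> of_int \<lceil>sqrt (real M)\<rceil>" by (rule le_of_int_ceiling)
      finally have "real_of_int (int j) < real_of_int \<lceil>sqrt (real M)\<rceil>" by simp
      then have "int j < \<lceil>sqrt (real M)\<rceil>" by (simp only: of_int_less_iff)
      then show "j \<in> {..<nat \<lceil>sqrt (real M)\<rceil>}" by auto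
    qed
    have "card {j\<in>{1..<M}. P j} \<le> nat \<lceil>sqrt (real M)\<rceil>"
      using card_mono[OF _ sub] by simp
    then have "real (card {j\<in>{1..<M}. P j}) \<le> real (nat \<lceil>sqrt (real M)\<rceil>)" by linarith
    also have "\<dots> \<le> sqrt (real M) + 1"
    proof -
      have "sqrt (real M) \<ge> 0" by simp
      then have "\<lceil>sqrt (real M)\<rceil> \<ge> 0" by linarith
      then have "real (nat \<lceil>sqrt (real M)\<rceil>) = of_int \<lceil>sqrt (real M)\<rceil>" by simp
      also have "\<dots> \<le> sqrt (real M) + 1" by linarith
      finally show ?thesis .
    qed
    finally have c: "real (card {j\<in>{1..<M}. P j}) \<le> sqrt (real M) + 1" .
    show "(\<Sum>j\<in>{j\<in>{1..<M}. P j}. 1 / ln 2) \<le> (sqrt (real M) + 1) / ln 2"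
      using c by (simp add: divide_right_mono)
    have "real (M - 1) \<le> real M" by simp
    then show "real (M - 1) * (2 / ln (real M)) \<le> 2 * real M / ln (real M)"
      using lnM by (simp add: divide_simps)
  qed
  finally show ?thesis .
qed

lemma final_ineq:
  assumes N: "N \<ge> 2" and n: "n \<ge> 2"
  shows "(sqrt (real (n+N)) + 1) / ln 2 + 2 * real (n+N) / ln (real (n+N))
     \<le> ((2 * real N + 1) / ln 2 + 2 * real N) * (real n / ln (real n))"
proof -
  have lnn: "ln (real n) > 0" using n by simp
  have nN: "real (n + N) \<le> real N * real n"
  proof -
    have a: "real N - 1 \<ge> 1" "real n - 1 \<ge> 1" using N n by auto
    have "(real N - 1) * (real n - 1) \<ge> 1 * 1" by (rule mult_mono) (use a in auto)
    then have "real N * real n \<ge> real n + real N" by (simp add: algebra_simps)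
    then show ?thesis by simp
  qed
  have sq1: "sqrt (real (n+N)) \<le> real N * sqrt (real n)"
  proof -
    have "real (n+N) \<le> (real N)^2 * real n"
    proof -
      have "1 * (real N * real n) \<le> real N * (real N * real n)"
        using N by (intro mult_right_mono) auto
      then show ?thesis using nN by (simp add: power2_eq_square mult.assoc)
    qed
    then have "sqrt (real (n+N)) \<le> sqrt ((real N)^2 * real n)" by (rule real_sqrt_le_mono)
    also have "\<dots> = real N * sqrt (real n)" by (simp add: real_sqrt_mult)
    finally show ?thesis .
  qed
  have sq2: "sqrt (real n) \<le> 2 * (real n / ln (real n))"
  proof -
    have sp: "sqrt (real n) > 0" using n by simp
    have "ln (sqrt (real n)) \<le> sqrt (real n) - 1" using sp by (rule ln_le_minus_one)
    then have "ln (real n) \<le> 2 * sqrt (real n)" by (simp add: ln_sqrt)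
    then have "sqrt (real n) * ln (real n) \<le> sqrt (real n) * (2 * sqrt (real n))"
      using sp by (intro mult_left_mono) auto
    also have "\<dots> = 2 * real n" by simp
    finally show ?thesis using lnn by (simp add: field_simps)
  qed
  have lnl: "ln (real n) < real n" using n by (intro ln_less_self) auto
  have one: "1 \<le> real n / ln (real n)"
    using lnn lnl by (simp add: field_simps)
  have t1: "sqrt (real (n+N)) + 1 \<le> (2 * real N + 1) * (real n / ln (real n))"
  proof -
    have "sqrt (real (n+N)) + 1 \<le> real N * (2 * (real n / ln (real n))) + real n / ln (real n)"
    proof -
      have "real N * sqrt (real n) \<le> real N * (2 * (real n / ln (real n)))"
        using sq2 by (intro mult_left_mono) auto
      then show ?thesis using sq1 one by linarith
    qed
    then show ?thesis by (simp add: algebra_simps)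
  qed
  have t2: "2 * real (n+N) / ln (real (n+N)) \<le> 2 * real N * (real n / ln (real n))"
  proof -
    have l: "ln (real n) \<le> ln (real (n+N))" using n by simp
    have "real (n+N) / ln (real (n+N)) \<le> real (n+N) / ln (real n)"
      using l lnn by (intro divide_left_mono) auto
    also have "\<dots> \<le> real N * real n / ln (real n)" using nN lnn by (intro divide_right_mono) auto
    finally have h: "real (n+N) / ln (real (n+N)) \<le> real N * real n / ln (real n)" .
    have e1: "2 * real (n+N) / ln (real (n+N)) = 2 * (real (n+N) / ln (real (n+N)))" by simp
    have e2: "2 * real N * (real n / ln (real n)) = 2 * (real N * real n / ln (real n))" by simp
    show ?thesis unfolding e1 e2 by (rule mult_left_mono[OF h]) simp
  qed
  have "(sqrt (real (n+N)) + 1) / ln 2 \<le> (2 * real N + 1) * (real n / ln (real n)) / ln 2"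
    using t1 by (intro divide_right_mono) auto
  then show ?thesis using t2 by (simp add: algebra_simps)
qed



theorem mainTheorem11:
  fixes N :: nat
  assumes "N \<ge> 2"
  shows "(\<lambda>n::nat. \<Sum>k=1..n. measure lebesgue (cyl (1 / real N) (k + 1))
             * ln (1 - real k / real (n + N)))
         \<in> O(\<lambda>n. real n / ln (real n))"
proof (rule bigoI[where c = "2 * real N * 8 * ((2 * real N + 1) / ln 2 + 2 * real N)"])
  have N1: "N \<ge> 1" using assms by simp
  show "\<forall>\<^sub>F n in sequentially. norm (\<Sum>k=1..n. measure lebesgue (cyl (1 / real N) (k + 1))
             * ln (1 - real k / real (n + N)))
       \<le> 2 * real N * 8 * ((2 * real N + 1) / ln 2 + 2 * real N) * norm (real n / ln (real n))"
  proof (rule eventually_sequentiallyI[of 2])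
    fix n :: nat assume n: "n \<ge> 2"
    define m where "m k = measure lebesgue (cyl (1 / real N) (k + 1))" for k
    define w where "w k = - ln (1 - real k / real (n + N))" for k
    have w0: "w k \<ge> 0" if "k \<in> {1..n}" for k
    proof -
      have "1 - real k / real (n + N) \<le> 1" by simp
      moreover have "1 - real k / real (n + N) > 0" using that assms by (simp add: field_simps)
      ultimately have "ln (1 - real k / real (n + N)) \<le> 0" by simp
      then show ?thesis by (simp add: w_def)
    qed
    have "norm (\<Sum>k=1..n. m k * ln (1 - real k / real (n + N))) \<le> (\<Sum>k=1..n. \<bar>m k * ln (1 - real k / real (n + N))\<bar>)"
      unfolding real_norm_def by (rule sum_abs)
    also have "\<dots> = (\<Sum>k=1..n. m k * w k)"
    proof (intro sum.cong refl)
      fix k assume k: "k \<in> {1..n}"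
      have "m k \<ge> 0" by (simp add: m_def)
      then show "\<bar>m k * ln (1 - real k / real (n + N))\<bar> = m k * w k"
        using w0[OF k] by (simp add: w_def abs_mult)
    qed
    also have "\<dots> \<le> (\<Sum>k=1..n. 2 * real N * (A k * w k))"
    proof (intro sum_mono)
      fix k assume k: "k \<in> {1..n}"
      have "m k * w k \<le> (2 * real N * A k) * w k"
        using measure_cyl[OF N1, of k] w0[OF k] by (intro mult_right_mono) (auto simp: m_def)
      then show "m k * w k \<le> 2 * real N * (A k * w k)" by (simp add: mult.assoc)
    qed
    also have "\<dots> = 2 * real N * (\<Sum>k=1..n. A k * w k)" by (simp add: sum_distrib_left)
    also have "(\<Sum>k=1..n. A k * w k) \<le> 8 * (\<Sum>j\<in>{1..<n+N}. 1 / ln (real j + 2))"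
      unfolding w_def by (rule main_sum[OF A_nonneg renewal N1])
    also have "(\<Sum>j\<in>{1..<n+N}. 1 / ln (real j + 2)) \<le>
        (sqrt (real (n+N)) + 1) / ln 2 + 2 * real (n+N) / ln (real (n+N))"
      by (rule sum_ln_bound) (use assms in simp)
    also have "\<dots> \<le> ((2 * real N + 1) / ln 2 + 2 * real N) * (real n / ln (real n))"
      by (rule final_ineq[OF assms n])
    also have "real n / ln (real n) = norm (real n / ln (real n))"
      using n by simp
    finally show "norm (\<Sum>k=1..n. measure lebesgue (cyl (1 / real N) (k + 1))
             * ln (1 - real k / real (n + N)))
       \<le> 2 * real N * 8 * ((2 * real N + 1) / ln 2 + 2 * real N) * norm (real n / ln (real n))"
      by (simp add: m_def mult_left_mono mult.assoc)
  qed
qed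

end
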